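(* Let $u\in(\mathbb{N}\cup\{0\})^m$ and put $M:=\{x\in\mathbb{R}^m:0\leq x\leq u\}$ (entrywise order) with the metric induced by $\|\cdot\|_\infty$. Every optimal code $C$ in $(M,\|\cdot\|_\infty)$ of size $\prod_{i=1}^m(u_i+1)-1$ admits a decomposition $C=A\sqcup B$ for which there exists $i\in\{1,\ldots,m\}$ such that $|A|=\prod_{s=1}^m(u_s+1)-(u_i+1)$ and $|B|=u_i$, and furthermore $A\subseteq M\cap\mathbb{Z}^m$ and $B\subseteq\{x+te_i:t\in\mathbb{R}\}$ for some $x\in\mathbb{Z}^m$.
   Context: For a finite $C\subseteq M$, $\delta(C):=\min\{\|x-y\|_\infty:x,y\in C,x\neq y\}$. An optimal code of size $n$ is an $n$-element subset of $M$ maximizing $\delta$ among all $n$-element subsets. $e_i$ denotes the $i$th standard basis vector. *)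

theory Defs
  imports "HOL-Analysis.Analysis"
begin

text \<open>The sup-norm distance on real^'m (the library norm on real^'m is Euclidean).\<close>
definition dist_inf :: "real^'m \<Rightarrow> real^'m \<Rightarrow> real" where
  "dist_inf x y = Max (range (\<lambda>i. \<bar>x$i - y$i\<bar>))"

definition min_dist :: "(real^'m) set \<Rightarrow> real" where
  "min_dist C = Min {dist_inf x y | x y. x \<in> C \<and> y \<in> C \<and> x \<noteq> y}"

definition box_M :: "nat^'m \<Rightarrow> (real^'m) set" where
  "box_M u = {x. \<forall>i. 0 \<le> x$i \<and> x$i \<le> real (u$i)}"

definition int_points :: "(real^'m) set" where
  "int_points = {x. \<forall>i. x$i \<in> \<int>}"

definition optimal_code :: "(real^'m) set \<Rightarrow> nat \<Rightarrow> (real^'m) set \<Rightarrow> bool" where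
  "optimal_code M n C \<longleftrightarrow> C \<subseteq> M \<and> finite C \<and> card C = n \<and>
     (\<forall>D. D \<subseteq> M \<and> finite D \<and> card D = n \<longrightarrow> min_dist D \<le> min_dist C)"

end

theory Submission
  imports Defs
begin


lemma dist_inf_ge1:
  fixes x y :: "real^'m"
  shows "1 \<le> dist_inf x y \<longleftrightarrow> (\<exists>i. 1 \<le> \<bar>x$i - y$i\<bar>)"
  unfolding dist_inf_def by (subst Max_ge_iff) auto

lemma floor_eq_close: "\<lfloor>a::real\<rfloor> = \<lfloor>b\<rfloor> \<Longrightarrow> \<bar>a - b\<bar> < 1"
  using of_int_floor_le[of a] of_int_floor_le[of b] real_of_int_floor_add_one_gt[of a]
    real_of_int_floor_add_one_gt[of b] by linarith

lemma ceiling_eq_close: "\<lceil>a::real\<rceil> = \<lceil>b\<rceil> \<Longrightarrow> \<bar>a - b\<bar> < 1"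
proof -
  assume h: "\<lceil>a::real\<rceil> = \<lceil>b\<rceil>"
  then have "real_of_int \<lceil>a\<rceil> = real_of_int \<lceil>b\<rceil>" by simp
  then show ?thesis using ceiling_correct[of a] ceiling_correct[of b] by linarith
qed

definition Rf :: "'m set \<Rightarrow> real^'m \<Rightarrow> real^'m" where
 "Rf T x = (\<chi> i. if i \<in> T then real_of_int \<lfloor>x$i\<rfloor> else real_of_int \<lceil>x$i\<rceil>)"

lemma Rf_inj:
  fixes C :: "(real^'m) set"
  assumes sep: "\<forall>x\<in>C. \<forall>y\<in>C. x \<noteq> y \<longrightarrow> (\<exists>i. 1 \<le> \<bar>x$i - y$i\<bar>)"
  shows "inj_on (Rf T) C"
proof (rule inj_onI)
  fix x y assume xy: "x \<in> C" "y \<in> C" "Rf T x = Rf T y"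
  have lt: "\<bar>x$i - y$i\<bar> < 1" for i
  proof -
    have "(Rf T x)$i = (Rf T y)$i" using xy by simp
    then show ?thesis
      by (cases "i \<in> T") (auto simp: Rf_def intro: floor_eq_close ceiling_eq_close)
  qed
  show "x = y"
  proof (rule ccontr)
    assume "x \<noteq> y"
    then obtain i where "1 \<le> \<bar>x$i - y$i\<bar>" using sep xy(1,2) by blast
    then show False using lt[of i] by simp
  qed
qed

lemma Rf_in:
  assumes "x \<in> box_M u"
  shows "Rf T x \<in> box_M u \<inter> int_points"
proof -
  have "0 \<le> x$i" "x$i \<le> real (u$i)" for i using assms by (auto simp: box_M_def)
  then show ?thesis
  proof -
    have a: "0 \<le> real_of_int \<lfloor>x$i\<rfloor> \<and> real_of_int \<lfloor>x$i\<rfloor> \<le> real (u$i)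
        \<and> 0 \<le> real_of_int \<lceil>x$i\<rceil> \<and> real_of_int \<lceil>x$i\<rceil> \<le> real (u$i)" for i
    proof -
      have "\<lceil>x$i\<rceil> \<le> int (u$i)" using \<open>x$i \<le> real (u$i)\<close> by (simp add: ceiling_le_iff)
      moreover have "\<lfloor>x$i\<rfloor> \<le> int (u$i)" using \<open>x$i \<le> real (u$i)\<close> by (simp add: floor_le_iff)
      moreover have "0 \<le> \<lfloor>x$i\<rfloor>" using \<open>0 \<le> x$i\<close> by simp
      moreover have "0 \<le> \<lceil>x$i\<rceil>" using \<open>0 \<le> x$i\<close> by simp
      ultimately show ?thesis by simp
    qed
    show ?thesis unfolding box_M_def int_points_def Rf_def using a by auto
  qed
qed

lemma Rf_insert:
  assumes "l \<notin> T"
  shows "Rf (insert l T) x = (if x$l \<in> \<int> then Rf T x else Rf T x - axis l 1)"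
proof -
  have "(Rf (insert l T) x)$i = (if x$l \<in> \<int> then Rf T x else Rf T x - axis l 1)$i" for i
  proof (cases "i = l")
    case True
    show ?thesis
    proof (cases "x$l \<in> \<int>")
      case True
      then obtain n where "x$l = of_int n" by (auto elim: Ints_cases)
      then show ?thesis using \<open>i = l\<close> assms by (simp add: Rf_def)
    next
      case False
      then have "x$l \<noteq> of_int \<lfloor>x$l\<rfloor>" by (metis Ints_of_int)
      then have "\<lceil>x$l\<rceil> = \<lfloor>x$l\<rfloor> + 1" by (simp add: ceiling_altdef)
      then show ?thesis using \<open>i = l\<close> assms False by (simp add: Rf_def axis_def)
    qed
  next
    case False
    then show ?thesis using assms by (simp add: Rf_def axis_def)
  qed
  then show ?thesis by (simp add: vec_eq_iff)
qed

lemma Rf_int: "x \<in> int_points \<Longrightarrow> Rf T x = x"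
  unfolding Rf_def int_points_def by (auto simp: vec_eq_iff elim!: Ints_cases)



lemma shift:
  fixes R R' :: "real^'m \<Rightarrow> real^'m"
  assumes injR': "inj_on R' C"
   and imgR: "R ` C = G - {q}"
   and imgR': "R' ` C \<subseteq> G"
   and Gpos: "\<forall>g\<in>G. 0 \<le> g$l"
   and rel: "\<forall>x\<in>C. R' x = (if x$l \<in> \<int> then R x else R x - axis l 1)"
   and x: "x \<in> C" "x$l \<notin> \<int>"
  shows "(\<forall>i. i \<noteq> l \<longrightarrow> R x $ i = q $ i) \<and> (\<exists>x'\<in>C. x'$l \<notin> \<int> \<and> R x' = q + axis l 1)"
proof -
  define P where "P k \<longleftrightarrow> (\<exists>x'\<in>C. x'$l \<notin> \<int> \<and> R x' = R x - real k *\<^sub>R axis l 1)" for k :: nat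
  have P0: "P 0" using x by (auto simp: P_def)
  have "\<exists>k. P k \<and> \<not> P (Suc k)"
  proof (rule ccontr)
    assume "\<not> ?thesis"
    then have all: "P k" for k by (induction k) (use P0 in auto)
    define k where "k = nat \<lceil>R x $ l\<rceil> + 1"
    from all[of k] obtain x' where x': "x' \<in> C" "R x' = R x - real k *\<^sub>R axis l 1"
      by (auto simp: P_def)
    have "R x' \<in> R ` C" using x' by blast
    then have "R x' \<in> G" using imgR by blast
    then have "0 \<le> R x' $ l" using Gpos by auto
    moreover have "R x' $ l = R x $ l - real k" using x' by (simp add: axis_def)
    moreover have "R x $ l < real k" unfolding k_def
      using real_nat_ceiling_ge[of "R x $ l"] by simp
    ultimately show False by simp
  qed
  then obtain k where Pk: "P k" and nPk: "\<not> P (Suc k)" by blast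
  from Pk obtain x' where x': "x' \<in> C" "x'$l \<notin> \<int>" "R x' = R x - real k *\<^sub>R axis l 1"
    by (auto simp: P_def)
  define w where "w = R x - real (Suc k) *\<^sub>R axis l 1"
  have Rx'w: "R' x' = w" using rel x' unfolding w_def by (simp add: algebra_simps)
  have "w \<in> G" using imgR' x' Rx'w by auto
  have "w = q"
  proof (rule ccontr)
    assume "w \<noteq> q"
    then have "w \<in> R ` C" using imgR \<open>w \<in> G\<close> by auto
    then obtain y where y: "y \<in> C" "R y = w" by auto
    have "y$l \<in> \<int>" using nPk y unfolding P_def w_def by auto
    then have "R' y = w" using rel y by auto
    then have "y = x'" using injR' y x' Rx'w by (auto dest: inj_onD)
    then show False using x' \<open>y$l \<in> \<int>\<close> by simp
  qed
  have "R x = w + real (Suc k) *\<^sub>R axis l 1" unfolding w_def by simp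
  then have Rx: "R x = q + real (Suc k) *\<^sub>R axis l 1" using \<open>w = q\<close> by simp
  have "\<forall>i. i \<noteq> l \<longrightarrow> R x $ i = q $ i" using Rx by (simp add: axis_def)
  moreover have "R x' = q + axis l 1" using x'(3) Rx by (simp add: algebra_simps)
  ultimately show ?thesis using x' by blast
qed



lemma int_diff_ge1: "a \<in> \<int> \<Longrightarrow> b \<in> \<int> \<Longrightarrow> a \<noteq> (b::real) \<Longrightarrow> 1 \<le> \<bar>a - b\<bar>"
proof (elim Ints_cases)
  fix m n assume "a = of_int m" "b = of_int n" "a \<noteq> b"
  then have "m \<noteq> n" by auto
  then have "1 \<le> \<bar>m - n\<bar>" by arith
  then have "(1::real) \<le> of_int \<bar>m - n\<bar>" by (metis of_int_1 of_int_le_iff)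
  then show "1 \<le> \<bar>a - b\<bar>" using \<open>a = of_int m\<close> \<open>b = of_int n\<close> by simp
qed

lemma card_G:
  fixes u :: "nat^'m"
  shows "finite (box_M u \<inter> int_points) \<and> card (box_M u \<inter> int_points) = (\<Prod>i\<in>UNIV. u$i + 1)"
proof -
  define f :: "('m \<Rightarrow> nat) \<Rightarrow> real^'m" where "f g = (\<chi> i. real (g i))" for g
  have eq: "box_M u \<inter> int_points = f ` (PiE UNIV (\<lambda>i. {0..u$i}))"
  proof
    show "box_M u \<inter> int_points \<subseteq> f ` (PiE UNIV (\<lambda>i. {0..u$i}))"
    proof
      fix y assume y: "y \<in> box_M u \<inter> int_points"
      have "\<exists>n. y$i = real n \<and> n \<le> u$i" for i
      proof -
        from y have "y$i \<in> \<int>" "0 \<le> y$i" "y$i \<le> real (u$i)" by (auto simp: box_M_def int_points_def)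
        then obtain n where n: "y$i = of_int n" by (auto elim: Ints_cases)
        with \<open>0 \<le> y$i\<close> have "0 \<le> n" by simp
        then have "y$i = real (nat n)" using n by simp
        moreover have "nat n \<le> u$i" using \<open>y$i \<le> real (u$i)\<close> calculation by simp
        ultimately show ?thesis by blast
      qed
      then obtain g where g: "\<And>i. y$i = real (g i) \<and> g i \<le> u$i" by metis
      have "y = f g" unfolding f_def using g by (simp add: vec_eq_iff)
      moreover have "g \<in> PiE UNIV (\<lambda>i. {0..u$i})" using g by auto
      ultimately show "y \<in> f ` (PiE UNIV (\<lambda>i. {0..u$i}))" by blast
    qed
    show "f ` (PiE UNIV (\<lambda>i. {0..u$i})) \<subseteq> box_M u \<inter> int_points"
      by (auto simp: f_def box_M_def int_points_def PiE_iff)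
  qed
  have inj: "inj_on f (PiE UNIV (\<lambda>i. {0..u$i}))"
    by (rule inj_onI) (auto simp: f_def vec_eq_iff)
  have "card (box_M u \<inter> int_points) = card (PiE UNIV (\<lambda>i. {0..u$i}))"
    unfolding eq using inj by (rule card_image)
  also have "\<dots> = (\<Prod>i\<in>UNIV. u$i + 1)" by (simp add: card_PiE)
  finally show ?thesis using eq by (simp add: finite_PiE)
qed

lemma card_line:
  fixes u :: "nat^'m"
  assumes p: "p \<in> box_M u \<inter> int_points"
  shows "card (box_M u \<inter> int_points \<inter> {p + t *\<^sub>R axis j 1 | t. True}) = u$j + 1"
proof -
  define f :: "nat \<Rightarrow> real^'m" where "f k = (\<chi> i. if i = j then real k else p$i)" for k
  have eq: "box_M u \<inter> int_points \<inter> {p + t *\<^sub>R axis j 1 | t. True} = f ` {0..u$j}"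
  proof
    show "box_M u \<inter> int_points \<inter> {p + t *\<^sub>R axis j 1 | t. True} \<subseteq> f ` {0..u$j}"
    proof
      fix y assume y: "y \<in> box_M u \<inter> int_points \<inter> {p + t *\<^sub>R axis j 1 | t. True}"
      then obtain t where t: "y = p + t *\<^sub>R axis j 1" by auto
      from y have "y$j \<in> \<int>" "0 \<le> y$j" "y$j \<le> real (u$j)" by (auto simp: box_M_def int_points_def)
      then obtain n where n: "y$j = of_int n" by (auto elim: Ints_cases)
      with \<open>0 \<le> y$j\<close> have "0 \<le> n" by simp
      then have yj: "y$j = real (nat n)" using n by simp
      moreover have "nat n \<le> u$j" using \<open>y$j \<le> real (u$j)\<close> calculation by simp
      moreover have "y = f (nat n)" unfolding f_def using yj t by (auto simp: vec_eq_iff axis_def)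
      ultimately show "y \<in> f ` {0..u$j}" by auto
    qed
    show "f ` {0..u$j} \<subseteq> box_M u \<inter> int_points \<inter> {p + t *\<^sub>R axis j 1 | t. True}"
    proof
      fix y assume "y \<in> f ` {0..u$j}"
      then obtain k where k: "k \<le> u$j" "y = f k" by auto
      have "y = p + (real k - p$j) *\<^sub>R axis j 1" using k by (auto simp: f_def vec_eq_iff axis_def)
      moreover have "y \<in> box_M u \<inter> int_points" using k p
        by (auto simp: f_def box_M_def int_points_def)
      ultimately show "y \<in> box_M u \<inter> int_points \<inter> {p + t *\<^sub>R axis j 1 | t. True}" by blast
    qed
  qed
  have "inj_on f {0..u$j}"
  proof (rule inj_onI)
    fix x y assume "x \<in> {0..u$j}" "y \<in> {0..u$j}" "f x = f y"
    then have "(f x)$j = (f y)$j" by simp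
    then show "x = y" by (simp add: f_def)
  qed
  then show ?thesis unfolding eq by (simp add: card_image)
qed

theorem theorem4p5:
  fixes u :: "nat^'m" and C :: "(real^'m) set"
  assumes "optimal_code (box_M u) ((\<Prod>i\<in>UNIV. u$i + 1) - 1) C"
  shows "\<exists>A B i x. C = A \<union> B \<and> A \<inter> B = {} \<and>
           card A = (\<Prod>s\<in>UNIV. u$s + 1) - (u$i + 1) \<and> card B = u$i \<and>
           A \<subseteq> box_M u \<inter> int_points \<and>
           x \<in> int_points \<and> B \<subseteq> {x + t *\<^sub>R axis i 1 | t. True}"
proof -
  define N where "N = (\<Prod>i\<in>UNIV. u$i + 1)"
  define G where "G = box_M u \<inter> int_points"
  from assms have CM: "C \<subseteq> box_M u" "finite C" "card C = N - 1"
    and opt: "\<And>D. D \<subseteq> box_M u \<Longrightarrow> finite D \<Longrightarrow> card D = N - 1 \<Longrightarrow> min_dist D \<le> min_dist C"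
    by (auto simp: optimal_code_def N_def)
  have finG: "finite G" and cardG: "card G = N" using card_G[of u] by (auto simp: G_def N_def)
  have Npos: "0 < N" unfolding N_def by (rule prod_pos) auto
  have Gint: "\<And>g i. g \<in> G \<Longrightarrow> g$i \<in> \<int>" and Gpos: "\<And>g i. g \<in> G \<Longrightarrow> 0 \<le> g$i"
    by (auto simp: G_def int_points_def box_M_def)
  have sep: "\<forall>x\<in>C. \<forall>y\<in>C. x \<noteq> y \<longrightarrow> (\<exists>i. 1 \<le> \<bar>x$i - y$i\<bar>)"
  proof (cases "2 \<le> N - 1")
    case True
    have "0 \<in> G" by (auto simp: G_def box_M_def int_points_def)
    define D where "D = G - {0}"
    have D: "D \<subseteq> box_M u" "finite D" "card D = N - 1"
      using finG cardG \<open>0 \<in> G\<close> by (auto simp: D_def G_def)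
    have le: "min_dist D \<le> min_dist C" using opt D by blast
    define SD where "SD = {dist_inf x y | x y. x \<in> D \<and> y \<in> D \<and> x \<noteq> y}"
    have "finite SD"
      by (rule finite_subset[of _ "(\<lambda>(x,y). dist_inf x y) ` (D \<times> D)"]) (auto simp: SD_def D)
    moreover have "SD \<noteq> {}"
    proof -
      have "\<not> card D \<le> Suc 0" using D True by simp
      then obtain x y where "x \<in> D" "y \<in> D" "x \<noteq> y" using card_le_Suc0_iff_eq[OF D(2)] by blast
      then show ?thesis by (auto simp: SD_def)
    qed
    moreover have "\<forall>s\<in>SD. 1 \<le> s"
    proof
      fix s assume "s \<in> SD"
      then obtain x y where xy: "x \<in> D" "y \<in> D" "x \<noteq> y" "s = dist_inf x y" by (auto simp: SD_def)
      then obtain i where "x$i \<noteq> y$i" by (auto simp: vec_eq_iff)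
      moreover have "x$i \<in> \<int>" "y$i \<in> \<int>" using xy Gint by (auto simp: D_def)
      ultimately have "1 \<le> \<bar>x$i - y$i\<bar>" by (intro int_diff_ge1)
      then show "1 \<le> s" using xy dist_inf_ge1 by blast
    qed
    ultimately have "1 \<le> min_dist D" unfolding min_dist_def SD_def[symmetric] by simp
    with le have m1: "1 \<le> min_dist C" by simp
    show ?thesis
    proof (intro ballI impI)
      fix x y assume xy: "x \<in> C" "y \<in> C" "x \<noteq> y"
      define SC where "SC = {dist_inf x y | x y. x \<in> C \<and> y \<in> C \<and> x \<noteq> y}"
      have "finite SC"
        by (rule finite_subset[of _ "(\<lambda>(x,y). dist_inf x y) ` (C \<times> C)"]) (auto simp: SC_def CM)
      moreover have "dist_inf x y \<in> SC" using xy by (auto simp: SC_def)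
      ultimately have "min_dist C \<le> dist_inf x y" unfolding min_dist_def SC_def[symmetric] by simp
      with m1 show "\<exists>i. 1 \<le> \<bar>x$i - y$i\<bar>" using dist_inf_ge1 by (metis order.trans)
    qed
  next
    case False
    then have "card C \<le> Suc 0" using CM by simp
    then show ?thesis using card_le_Suc0_iff_eq[OF CM(2)] by blast
  qed
  have RinG: "Rf T ` C \<subseteq> G" for T using Rf_in CM(1) by (auto simp: G_def)
  have Rinj: "inj_on (Rf T) C" for T using Rf_inj[OF sep] .
  have miss: "\<exists>q. q \<in> G \<and> Rf T ` C = G - {q}" for T
  proof -
    have c: "card (Rf T ` C) = N - 1" using card_image[OF Rinj] CM by simp
    have "card (G - Rf T ` C) = 1" using card_Diff_subset[OF finite_imageI[OF CM(2)] RinG] c cardG Npos by simp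
    then obtain q where "G - Rf T ` C = {q}" by (rule card_1_singletonE)
    then have "q \<in> G \<and> Rf T ` C = G - {q}" using RinG by blast
    then show ?thesis by blast
  qed
  define q where "q T = (SOME q. q \<in> G \<and> Rf T ` C = G - {q})" for T
  have qG: "q T \<in> G" and qimg: "Rf T ` C = G - {q T}" for T
    using someI_ex[OF miss[of T]] unfolding q_def[symmetric] by auto
  define p where "p = q {}"
  have shiftT: "(\<forall>i. i \<noteq> l \<longrightarrow> Rf T x $ i = q T $ i) \<and> (\<exists>x'\<in>C. x'$l \<notin> \<int> \<and> Rf T x' = q T + axis l 1)"
    if "l \<notin> T" "x \<in> C" "x$l \<notin> \<int>" for T l x
  proof (rule shift[where R'="Rf (insert l T)" and G=G])
    show "inj_on (Rf (insert l T)) C" by (rule Rinj)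
    show "Rf T ` C = G - {q T}" by (rule qimg)
    show "Rf (insert l T) ` C \<subseteq> G" by (rule RinG)
    show "\<forall>g\<in>G. 0 \<le> g $ l" using Gpos by blast
    show "\<forall>x\<in>C. Rf (insert l T) x = (if x $ l \<in> \<int> then Rf T x else Rf T x - axis l 1)"
      using Rf_insert[OF \<open>l \<notin> T\<close>] by blast
  qed (use that in auto)
  have pmiss: "p \<notin> Rf {} ` C" using qimg[of "{}"] by (auto simp: p_def)
  have one: "x$l \<in> \<int>" if "x \<in> C" "x$j \<notin> \<int>" "l \<noteq> j" for x j l
  proof (rule ccontr)
    assume "x$l \<notin> \<int>"
    have a: "\<forall>i. i \<noteq> j \<longrightarrow> Rf {} x $ i = p $ i" using shiftT[of j "{}" x] that by (auto simp: p_def)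
    have b: "\<forall>i. i \<noteq> l \<longrightarrow> Rf {} x $ i = p $ i" using shiftT[of l "{}" x] that \<open>x$l \<notin> \<int>\<close> by (auto simp: p_def)
    have "Rf {} x = p" using a b that(3) by (metis vec_eq_iff)
    then show False using pmiss that(1) by blast
  qed
  have int_ceil: "real_of_int \<lceil>a\<rceil> = a" if "a \<in> \<int>" for a :: real
    using that by (auto elim: Ints_cases)
  have online: "x = p + (x$j - p$j) *\<^sub>R axis j 1" if "x \<in> C" "x$j \<notin> \<int>" for x j
  proof -
    have a: "\<forall>i. i \<noteq> j \<longrightarrow> Rf {} x $ i = p $ i" using shiftT[of j "{}" x] that by (auto simp: p_def)
    have "x$i = p$i" if "i \<noteq> j" for i
    proof -
      have "x$i \<in> \<int>" using one \<open>x \<in> C\<close> \<open>x$j \<notin> \<int>\<close> that by blast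
      then have "Rf {} x $ i = x$i" by (simp add: Rf_def int_ceil)
      then show ?thesis using a that by simp
    qed
    then show ?thesis by (auto simp: vec_eq_iff axis_def)
  qed
  have two: "j = l" if "y \<in> C" "y$j \<notin> \<int>" "z \<in> C" "z$l \<notin> \<int>" for y z j l
  proof (rule ccontr)
    assume jl: "j \<noteq> l"
    from shiftT[of j "{}" y] that obtain x' where x': "x' \<in> C" "x'$j \<notin> \<int>" "Rf {} x' = p + axis j 1"
      by (auto simp: p_def)
    have "Rf {j} x' = p" using Rf_insert[of j "{}" x'] x' by simp
    then have "p \<in> Rf {j} ` C" using x' by blast
    then have qp: "q {j} \<noteq> p" using qimg[of "{j}"] by auto
    then have "q {j} \<in> Rf {} ` C" using qimg[of "{}"] qG[of "{j}"] by (auto simp: p_def)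
    then obtain w where w: "w \<in> C" "Rf {} w = q {j}" by auto
    have "w$j \<notin> \<int>"
    proof
      assume "w$j \<in> \<int>"
      then have "Rf {j} w = q {j}" using Rf_insert[of j "{}" w] w by simp
      then show False using qimg[of "{j}"] w by auto
    qed
    then have qj: "\<forall>i. i \<noteq> j \<longrightarrow> q {j} $ i = p $ i" using shiftT[of j "{}" w] w by (auto simp: p_def)
    have "z$j \<in> \<int>" using one that jl by metis
    then have "Rf {j} z = Rf {} z" using Rf_insert[of j "{}" z] by simp
    moreover have "Rf {j} z $ j = q {j} $ j" using shiftT[of l "{j}" z] that jl by auto
    moreover have "Rf {} z $ j = p $ j" using shiftT[of l "{}" z] that jl by (auto simp: p_def)
    ultimately have "q {j} $ j = p $ j" by simp
    then have "q {j} = p" using qj by (metis vec_eq_iff)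
    then show False using qp by simp
  qed
  obtain j where jprop: "\<And>x i. x \<in> C \<Longrightarrow> x$i \<notin> \<int> \<Longrightarrow> i = j"
  proof (cases "\<exists>x\<in>C. \<exists>i. x$i \<notin> \<int>")
    case True
    then obtain x0 i0 where "x0 \<in> C" "x0$i0 \<notin> \<int>" by blast
    then show ?thesis using that two by metis
  next
    case False
    then show ?thesis using that by blast
  qed
  define L where "L = {p + t *\<^sub>R axis j 1 | t. True}"
  have pG: "p \<in> G" using qG by (simp add: p_def)
  have notL_int: "x \<in> int_points" if "x \<in> C" "x \<notin> L" for x
  proof -
    have "x$i \<in> \<int>" for i
    proof (rule ccontr)
      assume "x$i \<notin> \<int>"
      then have "i = j" using jprop that by blast
      then have "x \<in> L" using online[OF that(1)] \<open>x$i \<notin> \<int>\<close> unfolding L_def by blast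
      then show False using that by simp
    qed
    then show ?thesis by (simp add: int_points_def)
  qed
  define A where "A = C - L"
  define B where "B = C \<inter> L"
  have AG: "A \<subseteq> G" using notL_int CM(1) by (auto simp: A_def G_def)
  have cGL: "card (G \<inter> L) = u$j + 1" using card_line[of p u j] pG by (simp add: G_def L_def Int_assoc)
  have GLsub: "G \<inter> L \<subseteq> G" by blast
  have "card (G \<inter> L) \<le> N" using card_mono[OF finG GLsub] cardG by simp
  then have ujN: "u$j + 1 \<le> N" using cGL by simp
  have cA: "card A \<le> N - (u$j + 1)"
  proof -
    have "A \<subseteq> G - L" using AG by (auto simp: A_def)
    then have "card A \<le> card (G - L)" using finG by (intro card_mono) auto
    also have "\<dots> = N - (u$j + 1)" using card_Diff_subset_Int[of G L] finG cGL cardG by simp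
    finally show ?thesis .
  qed
  have cB: "card B \<le> u$j"
  proof -
    have "Rf {} ` B \<subseteq> (G \<inter> L) - {p}"
    proof
      fix y assume "y \<in> Rf {} ` B"
      then obtain x where x: "x \<in> C" "x \<in> L" "y = Rf {} x" by (auto simp: B_def)
      then obtain t where t: "x = p + t *\<^sub>R axis j 1" by (auto simp: L_def)
      have "y \<in> G - {p}" using qimg[of "{}"] x by (auto simp: p_def)
      moreover have "y = p + (real_of_int \<lceil>p$j + t\<rceil> - p$j) *\<^sub>R axis j 1"
        using x t Gint[OF pG] int_ceil by (auto simp: vec_eq_iff axis_def Rf_def)
      ultimately show "y \<in> (G \<inter> L) - {p}" by (auto simp: L_def)
    qed
    moreover have "inj_on (Rf {}) B" using Rinj by (rule inj_on_subset) (auto simp: B_def)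
    ultimately have "card B \<le> card ((G \<inter> L) - {p})"
      using finG by (metis card_inj_on_le finite_Diff finite_Int)
    also have "\<dots> = u$j" using cGL pG by (simp add: L_def)
    finally show ?thesis .
  qed
  have "card C = card B + card A" unfolding A_def B_def by (rule card_Int_Diff[OF CM(2)])
  then have "card A + card B = N - 1" using CM by simp
  then have eqs: "card A = N - (u$j + 1)" "card B = u$j" using cA cB ujN by linarith+
  have "C = A \<union> B \<and> A \<inter> B = {} \<and>
           card A = N - (u$j + 1) \<and> card B = u$j \<and>
           A \<subseteq> box_M u \<inter> int_points \<and>
           p \<in> int_points \<and> B \<subseteq> {p + t *\<^sub>R axis j 1 | t. True}"
    using eqs AG pG by (auto simp: A_def B_def G_def L_def)
  then show ?thesis unfolding N_def by blast
qed

end
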